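(* Fix $\alpha\in(0,1)$ and constants $c_1,c_2,c_3,c_4>0$. There exist $C>0$ and $n_0$ such that for all $n\ge n_0$, every prime $p$ with $c_1n^\alpha\le p\le c_2n^\alpha$, every integer $t\ge c_3p^3$, every $b\in\{0,1\}$, and all integers $a_0,a_1,\dots,a_t$ and $u_0,u_1,\dots,u_t$ with $1\le a_i\le c_4\,p/\log n$ for all $i\in\{1,\dots,t\}$, setting $S=a_0+\sum_{i=1}^ta_ix_i$ and $U=u_0+\sum_{i=1}^tu_ix_i$, $$\Pr_{x\sim\mathrm{Unif}(\{0,1\}^t)}\big[\mathrm{MM}_p(S)\oplus(U\bmod 2)=b\big]\ \ge\ \tfrac12-\tfrac{C}{\log n}.$$
   Context: For odd prime $p$ and integer $a$, $\mathrm{MM}_p(a)=0$ if $(a\bmod p)\in\{0,\dots,(p-1)/2\}$ and $\mathrm{MM}_p(a)=1$ otherwise, where $a\bmod p\in\{0,\dots,p-1\}$. *)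

theory Defs
  imports "HOL-Library.FuncSet" "HOL-Computational_Algebra.Primes" Complex_Main
begin

definition MM :: "nat \<Rightarrow> int \<Rightarrow> int" where
  "MM p a = (if a mod int p \<in> {0..(int p - 1) div 2} then 0 else 1)"

end

theory Submission
  imports Defs "HOL-Real_Asymp.Real_Asymp"
begin


definition GG :: "nat \<Rightarrow> (int \<times> int) set" where "GG p = {0..<int p} \<times> {0..<2}"
definition sh :: "nat \<Rightarrow> int \<times> int \<Rightarrow> int \<times> int \<Rightarrow> int \<times> int" where
  "sh p g z = ((fst z - fst g) mod int p, (snd z - snd g) mod 2)"
definition Pav :: "nat \<Rightarrow> (int \<times> int \<Rightarrow> real) \<Rightarrow> int \<times> int \<Rightarrow> real" where
  "Pav p \<mu> z = (\<Sum>y\<in>{0..<int p}. \<mu> (y, snd z)) / real p"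
definition nu :: "nat \<Rightarrow> (int \<times> int \<Rightarrow> real) \<Rightarrow> int \<times> int \<Rightarrow> real" where
  "nu p \<mu> z = \<mu> z - Pav p \<mu> z"
definition En :: "nat \<Rightarrow> (int \<times> int \<Rightarrow> real) \<Rightarrow> real" where
  "En p \<mu> = (\<Sum>z\<in>GG p. (nu p \<mu> z)^2)"
definition stp :: "nat \<Rightarrow> int \<times> int \<Rightarrow> (int \<times> int \<Rightarrow> real) \<Rightarrow> int \<times> int \<Rightarrow> real" where
  "stp p g \<mu> z = (\<mu> z + \<mu> (sh p g z))/2"

lemma finite_GG[simp]: "finite (GG p)" by (simp add: GG_def)

lemma sh_in: "p > 0 \<Longrightarrow> sh p g z \<in> GG p"
  by (simp add: sh_def GG_def)

lemma mod_shift_eq: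
  fixes x y c m :: int
  assumes "(x - c) mod m = (y - c) mod m" "0 \<le> x" "x < m" "0 \<le> y" "y < m"
  shows "x = y"
proof -
  have "((x - c) + c) mod m = ((y - c) + c) mod m"
    using assms(1) by (rule mod_add_cong) simp
  then show ?thesis using assms by simp
qed

lemma mod_bij: assumes "p > 0"
  shows "bij_betw (\<lambda>y. (y - c) mod int p) {0..<int p} {0..<int p}"
proof -
  have inj: "inj_on (\<lambda>y. (y - c) mod int p) {0..<int p}"
    by (intro inj_onI) (auto intro: mod_shift_eq)
  have sub: "(\<lambda>y. (y - c) mod int p) ` {0..<int p} \<subseteq> {0..<int p}"
    using assms by auto
  show ?thesis unfolding bij_betw_def using inj endo_inj_surj[OF _ sub inj] by auto
qed

lemma sh_bij: assumes "p > 0" shows "bij_betw (sh p g) (GG p) (GG p)"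
proof -
  have inj: "inj_on (sh p g) (GG p)"
  proof (intro inj_onI)
    fix x y assume "x \<in> GG p" "y \<in> GG p" "sh p g x = sh p g y"
    then show "x = y" unfolding sh_def GG_def
      by (cases x, cases y) (auto intro: mod_shift_eq)
  qed
  have sub: "sh p g ` GG p \<subseteq> GG p" by (auto simp: sh_in[OF assms])
  show ?thesis unfolding bij_betw_def using inj endo_inj_surj[OF _ sub inj] by auto
qed

lemma sum_sh: "p > 0 \<Longrightarrow> (\<Sum>z\<in>GG p. h (sh p g z)) = (\<Sum>z\<in>GG p. h z)"
  using sum.reindex_bij_betw[OF sh_bij] .

lemma sum_mod_shift: "p > 0 \<Longrightarrow> (\<Sum>y\<in>{0..<int p}. h ((y - c) mod int p)) = (\<Sum>y\<in>{0..<int p}. h y)"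
  using sum.reindex_bij_betw[OF mod_bij] .

lemma sum_GG: "(\<Sum>z\<in>GG p. h z) = (\<Sum>e\<in>{0..<2::int}. \<Sum>y\<in>{0..<int p}. h (y,e))"
proof -
  have "(\<Sum>y\<in>{0..<int p}. \<Sum>e\<in>{0..<2::int}. h (y,e)) = sum h ({0..<int p} \<times> {0..<2::int})"
    by (simp add: sum.cartesian_product split_def)
  then show ?thesis unfolding GG_def by (simp add: sum.swap[of _ "{0..<2::int}"])
qed

lemma Pav_stp: assumes "p > 0"
  shows "Pav p (stp p g \<mu>) z = (Pav p \<mu> z + Pav p \<mu> (sh p g z))/2"
proof -
  have "(\<Sum>y\<in>{0..<int p}. \<mu> ((y - fst g) mod int p, (snd z - snd g) mod 2))
      = (\<Sum>y\<in>{0..<int p}. \<mu> (y, (snd z - snd g) mod 2))"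
    using sum_mod_shift[OF assms, of "\<lambda>y. \<mu> (y, (snd z - snd g) mod 2)"] by simp
  then show ?thesis
    unfolding Pav_def stp_def sh_def
    by (simp add: sum.distrib sum_divide_distrib[symmetric] add_divide_distrib)
qed

lemma nu_stp: "p > 0 \<Longrightarrow> nu p (stp p g \<mu>) z = (nu p \<mu> z + nu p \<mu> (sh p g z))/2"
  unfolding nu_def using Pav_stp[of p g \<mu> z] by (simp add: stp_def field_simps)

lemma En_stp: assumes "p > 0"
  shows "En p (stp p g \<mu>) = En p \<mu> - (\<Sum>z\<in>GG p. (nu p \<mu> z - nu p \<mu> (sh p g z))^2)/4"
proof -
  let ?n = "nu p \<mu>"
  have "En p (stp p g \<mu>) = (\<Sum>z\<in>GG p. ((?n z)^2 + (?n (sh p g z))^2)/2 - (?n z - ?n (sh p g z))^2/4)"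
    unfolding En_def
    by (intro sum.cong) (auto simp: nu_stp[OF assms] power2_eq_square field_simps)
  also have "\<dots> = ((\<Sum>z\<in>GG p. (?n z)^2) + (\<Sum>z\<in>GG p. (?n (sh p g z))^2))/2
      - (\<Sum>z\<in>GG p. (?n z - ?n (sh p g z))^2)/4"
    by (simp add: sum_subtractf sum.distrib sum_divide_distrib[symmetric])
  also have "\<dots> = En p \<mu> - (\<Sum>z\<in>GG p. (?n z - ?n (sh p g z))^2)/4"
    using sum_sh[OF assms, of "\<lambda>z. (?n z)^2" g] unfolding En_def by simp
  finally show ?thesis .
qed

lemma nu_coset: assumes "p > 0" shows "(\<Sum>y\<in>{0..<int p}. nu p \<mu> (y,e)) = 0"
  using assms unfolding nu_def Pav_def by (simp add: sum_subtractf)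

lemma shpow: assumes "p > 0" "z \<in> GG p"
  shows "(sh p g ^^ j) z = ((fst z - int j * fst g) mod int p, (snd z - int j * snd g) mod 2)"
proof (induction j)
  case 0 then show ?case using assms by (cases z) (simp add: GG_def)
next
  case (Suc j)
  then show ?case by (simp add: sh_def mod_diff_left_eq algebra_simps)
qed

lemma telescope: fixes f :: "'a \<Rightarrow> real" shows "f z - f ((F ^^ j) z) = (\<Sum>i<j. f ((F ^^ i) z) - f (F ((F ^^ i) z)))"
  by (induction j) auto

lemma sum_shpow: "p > 0 \<Longrightarrow> (\<Sum>z\<in>GG p. h ((sh p g ^^ i) z)) = (\<Sum>z\<in>GG p. h z)"
proof (induction i arbitrary: h)
  case 0 then show ?case by simp
next
  case (Suc i)
  have "(\<Sum>z\<in>GG p. h ((sh p g ^^ Suc i) z)) = (\<Sum>z\<in>GG p. (h \<circ> (sh p g ^^ i)) (sh p g z))"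
    by (simp add: funpow_Suc_right del: funpow.simps)
  also have "\<dots> = (\<Sum>z\<in>GG p. (h \<circ> (sh p g ^^ i)) z)" using sum_sh[OF Suc.prems] .
  also have "\<dots> = (\<Sum>z\<in>GG p. h z)" using Suc by simp
  finally show ?case .
qed

lemma cauchy_sum: "finite A \<Longrightarrow> (\<Sum>i\<in>A. x i)^2 \<le> real (card A) * (\<Sum>i\<in>A. (x i)^2)"
proof -
  assume fin: "finite A"
  have "(\<Sum>i\<in>A. x i)^2 = (\<Sum>i\<in>A. \<Sum>k\<in>A. x i * x k)"
    by (simp add: power2_eq_square sum_product)
  also have "\<dots> \<le> (\<Sum>i\<in>A. \<Sum>k\<in>A. ((x i)^2 + (x k)^2)/2)"
  proof (intro sum_mono)
    fix i k
    have "0 \<le> (x i - x k)^2" by simp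
    then show "x i * x k \<le> ((x i)^2 + (x k)^2)/2" by (simp add: power2_eq_square algebra_simps)
  qed
  also have "\<dots> = (\<Sum>i\<in>A. \<Sum>k\<in>A. (x i)^2/2) + (\<Sum>i\<in>A. \<Sum>k\<in>A. (x k)^2/2)"
    by (simp add: sum.distrib add_divide_distrib)
  also have "\<dots> = real (card A) * (\<Sum>i\<in>A. (x i)^2)"
    by (simp add: sum_distrib_left[symmetric] sum_divide_distrib[symmetric] sum.swap[of _ A A] algebra_simps)
  finally show ?thesis .
qed

lemma exists_k:
  assumes "prime p" "p > 2" "\<not> int p dvd ga" "0 \<le> y" "y < int p" "0 \<le> y'" "y' < int p"
  shows "\<exists>k<p. (y - int (2*k) * ga) mod int p = y'"
proof -
  have pr: "prime (int p)" using assms(1) by simp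
  have n2: "\<not> int p dvd 2"
  proof
    assume "int p dvd 2" then have "int p \<le> 2" by (rule zdvd_imp_le) simp
    then show False using assms(2) by simp
  qed
  have "\<not> int p dvd 2*ga" using prime_dvd_mult_iff[OF pr] n2 assms(3) by simp
  then have cop: "coprime (int p) (2*ga)" by (rule prime_imp_coprime[OF pr])
  then have "gcd (2*ga) (int p) = 1" by (simp add: coprime_iff_gcd_eq_1 gcd.commute)
  then obtain w v where bez: "w*(2*ga) + v*int p = 1" using bezout_int[of "2*ga" "int p"] by auto
  define q where "q = ((y - y')*w) div int p"
  define k0 where "k0 = ((y - y')*w) mod int p"
  have k0q: "k0 = (y - y')*w - q * int p" unfolding k0_def q_def by (simp add: minus_div_mult_eq_mod[symmetric])
  have k0r: "0 \<le> k0" "k0 < int p" unfolding k0_def using assms by auto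
  have h: "(y-y')*(w*(2*ga) + v*int p) = y - y'" using bez by simp
  have "(y - 2*k0*ga) - y' = int p * ((y-y')*v + 2*ga*q)"
    unfolding k0q using h by algebra
  then have "int p dvd (y - 2*k0*ga) - y'" by simp
  then have "(y - 2*k0*ga) mod int p = y' mod int p" by (simp add: mod_eq_dvd_iff)
  also have "\<dots> = y'" using assms by simp
  finally have "(y - 2*k0*ga) mod int p = y'" .
  moreover have "int (2 * nat k0) = 2*k0" using k0r by simp
  moreover have "nat k0 < p" using k0r by simp
  ultimately show ?thesis by (metis)
qed

lemma poincare:
  fixes \<nu> :: "int \<times> int \<Rightarrow> real"
  assumes "prime p" "p > 2" "\<not> int p dvd fst g" and zero: "\<forall>e. (\<Sum>y\<in>{0..<int p}. \<nu> (y,e)) = 0"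
  shows "(\<Sum>z\<in>GG p. (\<nu> z)^2) \<le> 2 * real p^2 * (\<Sum>z\<in>GG p. (\<nu> z - \<nu> (sh p g z))^2)"
proof -
  have p0: "p > 0" using assms by simp
  define F where "F = sh p g"
  define d where "d = (\<lambda>w. (\<nu> w - \<nu> (F w))^2)"
  define D where "D = (\<Sum>z\<in>GG p. d z)"
  have dnn: "0 \<le> d w" for w unfolding d_def by simp
  have key1: "(\<nu> z - \<nu> (y', snd z))^2 \<le> 2*real p * (\<Sum>i<2*p. d ((F^^i) z))"
    if z: "z \<in> GG p" and y': "y' \<in> {0..<int p}" for z y'
  proof -
    obtain y e where ze: "z = (y,e)" and yr: "0 \<le> y" "y < int p" and er: "0 \<le> e" "e < 2"
      using z unfolding GG_def by auto
    obtain k where kp: "k < p" and hk: "(y - int (2*k) * fst g) mod int p = y'"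
      using exists_k[OF assms(1,2,3) yr] y' by auto
    have "2 dvd (e - int (2*k) * snd g) - e" by simp
    then have "(e - int (2*k) * snd g) mod 2 = e mod 2" by (simp add: mod_eq_dvd_iff)
    also have "\<dots> = e" using er by simp
    finally have "(e - int (2*k) * snd g) mod 2 = e" .
    then have pos: "(F^^(2*k)) z = (y', snd z)"
      unfolding F_def using shpow[OF p0 z, where g=g and j="2*k"] hk ze by simp
    have "\<nu> z - \<nu> (y', snd z) = (\<Sum>i<2*k. \<nu> ((F^^i) z) - \<nu> (F ((F^^i) z)))"
      using telescope[where f=\<nu> and z=z and F=F and j="2*k"] pos by simp
    then have "(\<nu> z - \<nu> (y', snd z))^2 \<le> real (card {..<2*k}) * (\<Sum>i<2*k. d ((F^^i) z))"
      using cauchy_sum[of "{..<2*k}" "\<lambda>i. \<nu> ((F^^i) z) - \<nu> (F ((F^^i) z))"] unfolding d_def by simp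
    also have "\<dots> \<le> 2*real p * (\<Sum>i<2*p. d ((F^^i) z))"
    proof (rule mult_mono)
      show "real (card {..<2*k}) \<le> 2 * real p" using kp by simp
      show "(\<Sum>i<2*k. d ((F^^i) z)) \<le> (\<Sum>i<2*p. d ((F^^i) z))"
        by (rule sum_mono2) (use kp dnn in auto)
    qed (auto intro: sum_nonneg dnn)
    finally show ?thesis .
  qed
  have per: "(\<Sum>y'\<in>{0..<int p}. (\<nu> z - \<nu> (y', snd z))^2)
      = real p * (\<nu> z)^2 + (\<Sum>y'\<in>{0..<int p}. (\<nu> (y', snd z))^2)" for z
  proof -
    have "(\<Sum>y'\<in>{0..<int p}. (\<nu> z - \<nu> (y', snd z))^2)
        = (\<Sum>y'\<in>{0..<int p}. (\<nu> z)^2 - 2*\<nu> z * \<nu> (y', snd z) + (\<nu> (y', snd z))^2)"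
      by (intro sum.cong) (simp_all add: power2_diff)
    also have "\<dots> = real p * (\<nu> z)^2 - 2 * \<nu> z * (\<Sum>y'\<in>{0..<int p}. \<nu> (y', snd z))
        + (\<Sum>y'\<in>{0..<int p}. (\<nu> (y', snd z))^2)"
      by (simp add: sum.distrib sum_subtractf sum_distrib_left)
    also have "\<dots> = real p * (\<nu> z)^2 + (\<Sum>y'\<in>{0..<int p}. (\<nu> (y', snd z))^2)"
      using zero by simp
    finally show ?thesis .
  qed
  have lhs: "(\<Sum>z\<in>GG p. \<Sum>y'\<in>{0..<int p}. (\<nu> z - \<nu> (y', snd z))^2) = 2 * real p * (\<Sum>z\<in>GG p. (\<nu> z)^2)"
  proof -
    have "(\<Sum>z\<in>GG p. \<Sum>y'\<in>{0..<int p}. (\<nu> (y', snd z))^2)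
        = (\<Sum>e\<in>{0..<2::int}. \<Sum>y\<in>{0..<int p}. \<Sum>y'\<in>{0..<int p}. (\<nu> (y', e))^2)"
      using sum_GG[where h="\<lambda>z. \<Sum>y'\<in>{0..<int p}. (\<nu> (y', snd z))^2" and p=p] by simp
    also have "\<dots> = real p * (\<Sum>e\<in>{0..<2::int}. \<Sum>y'\<in>{0..<int p}. (\<nu> (y', e))^2)"
      by (simp add: sum_distrib_left)
    also have "\<dots> = real p * (\<Sum>z\<in>GG p. (\<nu> z)^2)" by (simp add: sum_GG)
    finally have A: "(\<Sum>z\<in>GG p. \<Sum>y'\<in>{0..<int p}. (\<nu> (y', snd z))^2) = real p * (\<Sum>z\<in>GG p. (\<nu> z)^2)" .
    show ?thesis unfolding per by (simp add: sum.distrib A sum_distrib_left[symmetric])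
  qed
  have "(\<Sum>z\<in>GG p. \<Sum>y'\<in>{0..<int p}. (\<nu> z - \<nu> (y', snd z))^2)
      \<le> (\<Sum>z\<in>GG p. \<Sum>y'\<in>{0..<int p}. 2*real p * (\<Sum>i<2*p. d ((F^^i) z)))"
    by (intro sum_mono key1) auto
  also have "\<dots> = 2 * real p^2 * (\<Sum>i<2*p. \<Sum>z\<in>GG p. d ((F^^i) z))"
    by (simp add: sum_distrib_left sum.swap[of _ "GG p"] power2_eq_square algebra_simps)
  also have "\<dots> = 2 * real p^2 * (2 * real p * D)"
    unfolding F_def D_def using sum_shpow[OF p0, where h=d and g=g] by simp
  finally have "2 * real p * (\<Sum>z\<in>GG p. (\<nu> z)^2) \<le> 2 * real p * (2 * real p^2 * D)"
    unfolding lhs by (simp add: algebra_simps)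
  then have "(\<Sum>z\<in>GG p. (\<nu> z)^2) \<le> 2 * real p^2 * D" using p0 by (simp add: algebra_simps)
  then show ?thesis unfolding D_def d_def F_def .
qed

lemma contraction:
  assumes "prime p" "p > 2" "\<not> int p dvd fst g"
  shows "En p (stp p g \<mu>) \<le> (1 - 1/(8*real p^2)) * En p \<mu>"
proof -
  have p0: "p > 0" using assms by simp
  let ?D = "(\<Sum>z\<in>GG p. (nu p \<mu> z - nu p \<mu> (sh p g z))^2)"
  have "En p \<mu> \<le> 2 * real p^2 * ?D"
    unfolding En_def by (rule poincare[OF assms]) (simp add: nu_coset[OF p0])
  then have "En p \<mu> / (8 * real p^2) \<le> ?D / 4" using p0 by (simp add: field_simps)
  then show ?thesis using En_stp[OF p0, where g=g and \<mu>=\<mu>] by (simp add: algebra_simps)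
qed

definition XX :: "nat \<Rightarrow> (nat \<Rightarrow> int) set" where "XX k = {1..k} \<rightarrow>\<^sub>E {0,1::int}"
definition prr :: "nat \<Rightarrow> (nat \<Rightarrow> int) \<Rightarrow> (nat \<Rightarrow> int) \<Rightarrow> nat \<Rightarrow> (nat \<Rightarrow> int) \<Rightarrow> int \<times> int" where
  "prr p a u k x = ((a 0 + (\<Sum>i=1..k. a i * x i)) mod int p, (u 0 + (\<Sum>i=1..k. u i * x i)) mod 2)"
definition muu :: "nat \<Rightarrow> (nat \<Rightarrow> int) \<Rightarrow> (nat \<Rightarrow> int) \<Rightarrow> nat \<Rightarrow> int \<times> int \<Rightarrow> real" where
  "muu p a u k c = (\<Sum>x\<in>XX k. if prr p a u k x = c then 1 else 0) / 2^k"

lemma finite_XX[simp]: "finite (XX k)" unfolding XX_def by (simp add: finite_PiE)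

lemma card_XX: "card (XX k) = 2^k"
  unfolding XX_def by (simp add: card_PiE numeral_2_eq_2)

lemma sum_XX_Suc:
  fixes h :: "(nat \<Rightarrow> int) \<Rightarrow> real"
  shows "(\<Sum>x\<in>XX (Suc k). h x) = (\<Sum>f\<in>XX k. h (f(Suc k := 0)) + h (f(Suc k := 1)))"
proof -
  have eq: "XX (Suc k) = (\<lambda>(y,g). g(Suc k := y)) ` ({0,1} \<times> XX k)"
    unfolding XX_def using PiE_insert_eq[of "Suc k" "{1..k}" "\<lambda>_. {0,1::int}"]
    by (simp add: atLeastAtMostSuc_conv)
  have inj: "inj_on (\<lambda>(y,g). g(Suc k := y)) ({0,1} \<times> XX k)"
  proof (rule inj_onI, clarify)
    fix y g y' g' assume g: "g \<in> XX k" and g': "g' \<in> XX k"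
      and e': "g(Suc k := y) = g'(Suc k := y')"
    have "y = y'" using fun_cong[OF e', of "Suc k"] by simp
    moreover have "g = g'"
    proof
      fix i show "g i = g' i"
      proof (cases "i = Suc k")
        case True
        have "g i = undefined" using g True unfolding XX_def by (intro PiE_arb[of g]) auto
        moreover have "g' i = undefined" using g' True unfolding XX_def by (intro PiE_arb[of g']) auto
        ultimately show ?thesis by simp
      next
        case False then show ?thesis using fun_cong[OF e', of i] by simp
      qed
    qed
    ultimately show "y = y' \<and> g = g'" by simp
  qed
  have "(\<Sum>x\<in>XX (Suc k). h x) = (\<Sum>(y,g)\<in>{0,1} \<times> XX k. h (g(Suc k := y)))"
    unfolding eq by (subst sum.reindex[OF inj]) (simp add: split_def)
  also have "\<dots> = (\<Sum>y\<in>{0,1::int}. \<Sum>g\<in>XX k. h (g(Suc k := y)))"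
    by (simp add: sum.cartesian_product)
  also have "\<dots> = (\<Sum>f\<in>XX k. h (f(Suc k := 0)) + h (f(Suc k := 1)))"
    by (simp add: sum.distrib)
  finally show ?thesis .
qed

lemma prr_upd:
  "prr p a u (Suc k) (f(Suc k := v)) = ((a 0 + (\<Sum>i=1..k. a i * f i) + a (Suc k) * v) mod int p,
     (u 0 + (\<Sum>i=1..k. u i * f i) + u (Suc k) * v) mod 2)"
proof -
  have "(\<Sum>i=1..k. a i * (f(Suc k := v)) i) = (\<Sum>i=1..k. a i * f i)"
    by (intro sum.cong) auto
  moreover have "(\<Sum>i=1..k. u i * (f(Suc k := v)) i) = (\<Sum>i=1..k. u i * f i)"
    by (intro sum.cong) auto
  ultimately show ?thesis unfolding prr_def by (simp add: add.assoc)
qed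

lemma shift_iff:
  fixes s t c m :: int
  assumes "0 \<le> c" "c < m"
  shows "((s + t) mod m = c) \<longleftrightarrow> (s mod m = (c - t) mod m)"
proof -
  have "((s + t) mod m = c) \<longleftrightarrow> ((s + t) mod m = c mod m)" using assms by simp
  also have "\<dots> \<longleftrightarrow> m dvd (s + t) - c" by (simp add: mod_eq_dvd_iff)
  also have "\<dots> \<longleftrightarrow> m dvd s - (c - t)" by (simp add: algebra_simps)
  also have "\<dots> \<longleftrightarrow> s mod m = (c - t) mod m" by (simp add: mod_eq_dvd_iff)
  finally show ?thesis .
qed

lemma prr_in: "p > 0 \<Longrightarrow> prr p a u k x \<in> GG p"
  unfolding prr_def GG_def by simp

lemma mu_step:
  assumes "p > 0" "c \<in> GG p"
  shows "muu p a u (Suc k) c = stp p (a (Suc k), u (Suc k)) (muu p a u k) c"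
proof -
  obtain c1 c2 where c: "c = (c1, c2)" "0 \<le> c1" "c1 < int p" "0 \<le> c2" "c2 < 2"
    using assms(2) unfolding GG_def by auto
  have z: "prr p a u (Suc k) (f(Suc k := 0)) = prr p a u k f" for f
    unfolding prr_upd by (simp add: prr_def)
  have o: "(prr p a u (Suc k) (f(Suc k := 1)) = c) \<longleftrightarrow>
      (prr p a u k f = sh p (a (Suc k), u (Suc k)) c)" for f
  proof -
    let ?S = "a 0 + (\<Sum>i=1..k. a i * f i)" and ?U = "u 0 + (\<Sum>i=1..k. u i * f i)"
    have "(prr p a u (Suc k) (f(Suc k := 1)) = c) \<longleftrightarrow>
        ((?S + a (Suc k)) mod int p = c1 \<and> (?U + u (Suc k)) mod 2 = c2)"
      by (simp only: prr_upd c(1) prod.inject mult_1_right)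
    also have "\<dots> \<longleftrightarrow> (?S mod int p = (c1 - a (Suc k)) mod int p \<and> ?U mod 2 = (c2 - u (Suc k)) mod 2)"
      by (simp only: shift_iff[OF c(2,3)] shift_iff[OF c(4,5)])
    also have "\<dots> \<longleftrightarrow> (prr p a u k f = sh p (a (Suc k), u (Suc k)) c)"
      unfolding prr_def sh_def c(1) by simp
    finally show ?thesis .
  qed
  have "(\<Sum>x\<in>XX (Suc k). if prr p a u (Suc k) x = c then 1 else 0 :: real)
      = (\<Sum>f\<in>XX k. if prr p a u k f = c then 1 else 0)
       + (\<Sum>f\<in>XX k. if prr p a u k f = sh p (a (Suc k), u (Suc k)) c then 1 else 0)"
    unfolding sum_XX_Suc z o by (simp add: sum.distrib)
  then show ?thesis unfolding muu_def stp_def by (simp add: field_simps)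
qed

lemma muu_nonneg: "0 \<le> muu p a u k c"
  unfolding muu_def by (intro divide_nonneg_pos sum_nonneg) auto

lemma muu_sum: assumes "p > 0" shows "(\<Sum>c\<in>GG p. muu p a u k c) = 1"
proof -
  have "(\<Sum>c\<in>GG p. \<Sum>x\<in>XX k. if prr p a u k x = c then 1 else 0 :: real)
      = (\<Sum>x\<in>XX k. \<Sum>c\<in>GG p. if prr p a u k x = c then 1 else 0)"
    by (rule sum.swap)
  also have "\<dots> = (\<Sum>x\<in>XX k. 1)"
    using prr_in[OF assms] by (simp add: sum.delta)
  also have "\<dots> = 2^k" by (simp add: card_XX)
  finally show ?thesis unfolding muu_def by (simp add: sum_divide_distrib[symmetric])
qed

lemma En_cong: assumes "\<forall>z\<in>GG p. \<mu> z = \<mu>' z" shows "En p \<mu> = En p \<mu>'"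
proof -
  have "Pav p \<mu> z = Pav p \<mu>' z" if "z \<in> GG p" for z
    unfolding Pav_def using assms that by (auto simp: GG_def intro!: sum.cong)
  then show ?thesis unfolding En_def nu_def using assms by (intro sum.cong) auto
qed

lemma En_iter:
  assumes "prime p" "p > 2" "\<forall>i\<in>{1..t}. \<not> int p dvd a i"
  shows "k \<le> t \<Longrightarrow> En p (muu p a u k) \<le> (1 - 1/(8*real p^2))^k * En p (muu p a u 0)"
proof (induction k)
  case 0 then show ?case by simp
next
  case (Suc k)
  have p0: "p > 0" using assms by simp
  have "1 \<le> real p^2" using p0 by simp
  then have "1/(8*real p^2) \<le> 1" by (simp add: divide_le_eq)
  then have q: "0 \<le> 1 - 1/(8*real p^2)" by simp
  have "En p (muu p a u (Suc k)) = En p (stp p (a (Suc k), u (Suc k)) (muu p a u k))"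
    by (rule En_cong) (simp add: mu_step[OF p0])
  also have "\<dots> \<le> (1 - 1/(8*real p^2)) * En p (muu p a u k)"
    by (rule contraction) (use assms Suc.prems in auto)
  also have "\<dots> \<le> (1 - 1/(8*real p^2)) * ((1 - 1/(8*real p^2))^k * En p (muu p a u 0))"
    by (rule mult_left_mono) (use Suc q in auto)
  finally show ?case by simp
qed

lemma coset_le:
  fixes \<mu> :: "int \<times> int \<Rightarrow> real"
  assumes "p > 0" "\<forall>z\<in>GG p. 0 \<le> \<mu> z" "(\<Sum>z\<in>GG p. \<mu> z) = 1" "e \<in> {0..<2}"
  shows "0 \<le> (\<Sum>y\<in>{0..<int p}. \<mu> (y,e))" "(\<Sum>y\<in>{0..<int p}. \<mu> (y,e)) \<le> 1"
proof -
  have nn: "0 \<le> (\<Sum>y\<in>{0..<int p}. \<mu> (y,e'))" if "e' \<in> {0..<2}" for e'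
    using assms(2) that unfolding GG_def by (auto intro!: sum_nonneg)
  then show "0 \<le> (\<Sum>y\<in>{0..<int p}. \<mu> (y,e))" using assms(4) by simp
  have "(\<Sum>y\<in>{0..<int p}. \<mu> (y,e)) \<le> (\<Sum>e'\<in>{0..<2::int}. \<Sum>y\<in>{0..<int p}. \<mu> (y,e'))"
    by (rule member_le_sum[of e _ "\<lambda>e'. \<Sum>y\<in>{0..<int p}. \<mu> (y,e')"]) (use assms(4) nn in auto)
  also have "\<dots> = 1" using assms(3) by (simp add: sum_GG)
  finally show "(\<Sum>y\<in>{0..<int p}. \<mu> (y,e)) \<le> 1" .
qed

lemma card_GG: "card (GG p) = 2 * p"
  unfolding GG_def by (simp add: card_cartesian_product)

lemma En_le:
  assumes "p > 0" "\<forall>z\<in>GG p. 0 \<le> \<mu> z" "(\<Sum>z\<in>GG p. \<mu> z) = 1"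
  shows "En p \<mu> \<le> 2 * real p"
proof -
  have "(nu p \<mu> z)^2 \<le> 1" if z: "z \<in> GG p" for z
  proof -
    have m0: "0 \<le> \<mu> z" using assms z by auto
    have m1: "\<mu> z \<le> 1" using member_le_sum[of z "GG p" \<mu>] assms z by auto
    have e: "snd z \<in> {0..<2}" using z by (auto simp: GG_def)
    have s0: "0 \<le> (\<Sum>y\<in>{0..<int p}. \<mu> (y,snd z))" and s1: "(\<Sum>y\<in>{0..<int p}. \<mu> (y,snd z)) \<le> 1"
      using coset_le[OF assms e] by auto
    have p1: "1 \<le> real p" using assms by simp
    have P0: "0 \<le> Pav p \<mu> z" unfolding Pav_def using s0 by simp
    have "Pav p \<mu> z \<le> (\<Sum>y\<in>{0..<int p}. \<mu> (y,snd z))" unfolding Pav_def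
      using s0 p1 by (simp add: divide_le_eq mult_le_cancel_left1 order_trans[OF _ mult_right_mono[OF p1 s0]])
    then have P1: "Pav p \<mu> z \<le> 1" using s1 by simp
    have "\<bar>nu p \<mu> z\<bar> \<le> 1" unfolding nu_def using m0 m1 P0 P1 by simp
    then show ?thesis by (simp add: abs_square_le_1)
  qed
  then have "En p \<mu> \<le> real (card (GG p)) * 1" unfolding En_def by (intro sum_bounded_above) auto
  then show ?thesis by (simp add: card_GG)
qed

definition AA :: "nat \<Rightarrow> int \<Rightarrow> (int \<times> int) set" where
  "AA p b = {c \<in> GG p. (MM p (fst c) + snd c) mod 2 = b}"

lemma card_half:
  assumes "p > 0" "e \<in> {0..<2}" "b \<in> {0,1}"
  shows "(real p - 1)/2 \<le> real (card {y\<in>{0..<int p}. (MM p y + e) mod 2 = b})"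
proof -
  define h where "h = (int p - 1) div 2"
  have h1: "2*h \<le> int p - 1" "int p - 2 \<le> 2*h" "0 \<le> h" "h < int p" unfolding h_def using assms by auto
  have MMy: "MM p y = (if y \<le> h then 0 else 1)" if "0 \<le> y" "y < int p" for y
    unfolding MM_def h_def using that by auto
  have eo: "e = 0 \<or> e = 1" using assms(2) by auto
  show ?thesis
  proof (cases "b = e")
    case True
    have "{y\<in>{0..<int p}. (MM p y + e) mod 2 = b} = {0..h}"
      using True eo h1 by (auto simp: MMy split: if_splits)
    then show ?thesis using h1 by simp
  next
    case False
    have "{y\<in>{0..<int p}. (MM p y + e) mod 2 = b} = {h+1..<int p}"
      using False eo assms(3) h1 by (auto simp: MMy split: if_splits)
    then show ?thesis using h1 by simp
  qed
qed

lemma final_bound: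
  fixes \<mu> :: "int \<times> int \<Rightarrow> real"
  assumes p0: "p > 0" and nn: "\<forall>z\<in>GG p. 0 \<le> \<mu> z" and s1: "(\<Sum>z\<in>GG p. \<mu> z) = 1" and b: "b \<in> {0,1}"
  shows "(real p - 1)/(2*real p) - sqrt (2*real p * En p \<mu>) \<le> (\<Sum>c\<in>AA p b. \<mu> c)"
proof -
  have Asub: "AA p b \<subseteq> GG p" unfolding AA_def by auto
  have finA: "finite (AA p b)" by (rule finite_subset[OF Asub finite_GG])
  have split: "(\<Sum>c\<in>AA p b. \<mu> c) = (\<Sum>c\<in>AA p b. Pav p \<mu> c) + (\<Sum>c\<in>AA p b. nu p \<mu> c)"
    unfolding nu_def by (simp add: sum.distrib[symmetric])
  have "(\<Sum>c\<in>AA p b. nu p \<mu> c)^2 \<le> real (card (AA p b)) * (\<Sum>c\<in>AA p b. (nu p \<mu> c)^2)"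
    by (rule cauchy_sum[OF finA])
  also have "\<dots> \<le> (2*real p) * En p \<mu>"
  proof (rule mult_mono)
    have "card (AA p b) \<le> card (GG p)" by (rule card_mono[OF finite_GG Asub])
    then show "real (card (AA p b)) \<le> 2 * real p" by (simp add: card_GG)
    show "(\<Sum>c\<in>AA p b. (nu p \<mu> c)^2) \<le> En p \<mu>"
      unfolding En_def by (rule sum_mono2[OF finite_GG Asub]) simp
  qed (auto intro: sum_nonneg)
  finally have "- (\<Sum>c\<in>AA p b. nu p \<mu> c) \<le> sqrt (2*real p * En p \<mu>)"
    by (intro real_le_rsqrt) simp
  moreover have "(real p - 1)/(2*real p) \<le> (\<Sum>c\<in>AA p b. Pav p \<mu> c)"
  proof -
    define m where "m e = (\<Sum>y\<in>{0..<int p}. \<mu> (y,e))" for e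
    have m0: "0 \<le> m e" if "e \<in> {0..<2}" for e unfolding m_def using coset_le[OF p0 nn s1 that] by simp
    have Pe: "Pav p \<mu> (y,e) = m e / real p" for y e by (simp add: Pav_def m_def)
    have msum: "(\<Sum>e\<in>{0..<2::int}. m e) = 1" using s1 unfolding m_def by (simp add: sum_GG)
    have "(\<Sum>c\<in>AA p b. Pav p \<mu> c) = (\<Sum>c\<in>GG p. if (MM p (fst c) + snd c) mod 2 = b then Pav p \<mu> c else 0)"
      unfolding AA_def by (simp add: sum.inter_filter)
    also have "\<dots> = (\<Sum>e\<in>{0..<2::int}. \<Sum>y\<in>{0..<int p}. if (MM p y + e) mod 2 = b then m e / real p else 0)"
      unfolding sum_GG by (intro sum.cong refl) (simp add: Pe)
    also have "\<dots> = (\<Sum>e\<in>{0..<2::int}. real (card {y\<in>{0..<int p}. (MM p y + e) mod 2 = b}) * (m e / real p))"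
      by (simp add: sum.inter_filter[symmetric])
    also have "\<dots> \<ge> (\<Sum>e\<in>{0..<2::int}. ((real p - 1)/2) * (m e / real p))"
      by (intro sum_mono mult_right_mono card_half[OF p0 _ b]) (use m0 p0 in auto)
    also have "(\<Sum>e\<in>{0..<2::int}. ((real p - 1)/2) * (m e / real p)) = (real p - 1)/(2*real p) * (\<Sum>e\<in>{0..<2::int}. m e)"
      by (simp add: sum_distrib_left)
    finally show ?thesis using msum by simp
  qed
  ultimately show ?thesis using split by linarith
qed

lemma prob_eq:
  assumes "p > 0"
  shows "real (card {x \<in> {1..t} \<rightarrow>\<^sub>E {0, 1::int}.
            (MM p (a 0 + (\<Sum>i=1..t. a i * x i)) + (u 0 + (\<Sum>i=1..t. u i * x i)) mod 2) mod 2 = b})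
          / 2 ^ t = (\<Sum>c\<in>AA p b. muu p a u t c)"
proof -
  have Asub: "AA p b \<subseteq> GG p" unfolding AA_def by auto
  have finA: "finite (AA p b)" by (rule finite_subset[OF Asub finite_GG])
  have cond: "((MM p (a 0 + (\<Sum>i=1..t. a i * x i)) + (u 0 + (\<Sum>i=1..t. u i * x i)) mod 2) mod 2 = b)
      \<longleftrightarrow> prr p a u t x \<in> AA p b" for x
    using prr_in[OF assms, of a u t x] unfolding AA_def prr_def by (simp add: MM_def)
  have seq: "{x \<in> {1..t} \<rightarrow>\<^sub>E {0, 1::int}.
            (MM p (a 0 + (\<Sum>i=1..t. a i * x i)) + (u 0 + (\<Sum>i=1..t. u i * x i)) mod 2) mod 2 = b}
      = {x \<in> XX t. prr p a u t x \<in> AA p b}"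
    unfolding XX_def using cond by blast
  have "real (card {x \<in> XX t. prr p a u t x \<in> AA p b}) = (\<Sum>x\<in>XX t. if prr p a u t x \<in> AA p b then 1 else 0)"
    by (simp add: sum.inter_filter[symmetric])
  also have "\<dots> = (\<Sum>x\<in>XX t. \<Sum>c\<in>AA p b. if prr p a u t x = c then 1 else 0)"
    using finA by (simp add: sum.delta)
  also have "\<dots> = (\<Sum>c\<in>AA p b. \<Sum>x\<in>XX t. if prr p a u t x = c then 1 else 0)"
    by (rule sum.swap)
  finally show ?thesis unfolding seq muu_def by (simp add: sum_divide_distrib)
qed



theorem lemma5p4:
  fixes \<alpha> c1 c2 c3 c4 :: real
  assumes "0 < \<alpha>" "\<alpha> < 1" "c1 > 0" "c2 > 0" "c3 > 0" "c4 > 0"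
  shows "\<exists>C>0. \<exists>n0::nat. \<forall>n::nat \<ge> n0. \<forall>p::nat. \<forall>t::nat. \<forall>b::int. \<forall>a u :: nat \<Rightarrow> int.
    (prime p \<and> c1 * real n powr \<alpha> \<le> real p \<and> real p \<le> c2 * real n powr \<alpha>
      \<and> real t \<ge> c3 * real p ^ 3 \<and> b \<in> {0, 1}
      \<and> (\<forall>i\<in>{1..t}. 1 \<le> a i \<and> real_of_int (a i) \<le> c4 * real p / ln (real n)))
    \<longrightarrow> real (card {x \<in> {1..t} \<rightarrow>\<^sub>E {0, 1::int}.
            (MM p (a 0 + (\<Sum>i=1..t. a i * x i)) + (u 0 + (\<Sum>i=1..t. u i * x i)) mod 2) mod 2 = b})
          / 2 ^ t
        \<ge> 1/2 - C / ln (real n)"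
proof -
  have ev1: "\<forall>\<^sub>F x in at_top. 4*x^2*exp(-c3*x/8) \<le> 1/(4*x^2::real)"
    using assms(5) by real_asymp
  then obtain X0 where X0: "\<And>x. x \<ge> X0 \<Longrightarrow> 4*x^2*exp(-c3*x/8) \<le> 1/(4*x^2::real)"
    unfolding eventually_at_top_linorder by blast
  define M where "M = max X0 3"
  have ev2: "\<forall>\<^sub>F n in sequentially. c1 * real n powr \<alpha> \<ge> M"
    using assms(1,3) by real_asymp
  have ev3: "\<forall>\<^sub>F n in sequentially. c1 * real n powr \<alpha> \<ge> ln (real n)"
    using assms(1,3) by real_asymp
  have ev4: "\<forall>\<^sub>F n in sequentially. ln (real n) > c4"
    by real_asymp
  obtain N where N: "\<And>n. n \<ge> N \<Longrightarrow> c1 * real n powr \<alpha> \<ge> M \<and> c1 * real n powr \<alpha> \<ge> ln (real n) \<and> ln (real n) > c4"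
    using eventually_conj[OF ev2 eventually_conj[OF ev3 ev4]] unfolding eventually_sequentially by blast
  show ?thesis
  proof (intro exI[of _ "1::real"] conjI exI[of _ N] allI impI)
    show "(0::real) < 1" by simp
    fix n p t :: nat and b :: int and a u :: "nat \<Rightarrow> int"
    assume n: "N \<le> n"
    assume H: "prime p \<and> c1 * real n powr \<alpha> \<le> real p \<and> real p \<le> c2 * real n powr \<alpha>
      \<and> real t \<ge> c3 * real p ^ 3 \<and> b \<in> {0, 1}
      \<and> (\<forall>i\<in>{1..t}. 1 \<le> a i \<and> real_of_int (a i) \<le> c4 * real p / ln (real n))"
    have pr: "prime p" and pM: "real p \<ge> M" and pl: "real p \<ge> ln (real n)" and lc: "ln (real n) > c4"
      and tp: "real t \<ge> c3 * real p ^ 3" and b: "b \<in> {0,1}"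
      using H N[OF n] by auto
    have ln0: "ln (real n) > 0" using lc assms(6) by simp
    have p3: "real p \<ge> 3" and pX: "real p \<ge> X0" using pM unfolding M_def by auto
    have p2: "p > 2" using p3 by simp
    have p0: "p > 0" using p2 by simp
    have ndvd: "\<forall>i\<in>{1..t}. \<not> int p dvd a i"
    proof
      fix i assume i: "i \<in> {1..t}"
      have a1: "1 \<le> a i" and a2: "real_of_int (a i) \<le> c4 * real p / ln (real n)" using H i by auto
      have "c4 * real p / ln (real n) < real p"
        using lc ln0 p0 by (simp add: divide_less_eq)
      then have "a i < int p" using a2 by linarith
      then show "\<not> int p dvd a i" using a1 zdvd_imp_le[of "int p" "a i"] by auto
    qed
    let ?q = "1 - 1/(8*real p^2)"
    let ?\<mu> = "muu p a u t"
    have nn: "\<forall>z\<in>GG p. 0 \<le> muu p a u k z" for k by (simp add: muu_nonneg)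
    have E0: "En p (muu p a u 0) \<le> 2 * real p"
      by (rule En_le[OF p0 nn muu_sum[OF p0]])
    have Et: "En p ?\<mu> \<le> ?q^t * En p (muu p a u 0)"
      by (rule En_iter[OF pr p2 ndvd]) simp
    have q0: "0 \<le> ?q"
    proof -
      have "1 \<le> real p^2" using p0 by simp
      then have "1/(8*real p^2) \<le> 1" by (simp add: divide_le_eq)
      then show ?thesis by simp
    qed
    have "?q \<le> exp (- (1/(8*real p^2)))" using exp_ge_add_one_self[of "- (1/(8*real p^2))"] by simp
    then have "?q^t \<le> exp (- (1/(8*real p^2)))^t" by (rule power_mono[OF _ q0])
    also have "\<dots> = exp (real t * (- (1/(8*real p^2))))" by (rule exp_of_nat_mult[symmetric])
    also have "\<dots> \<le> exp (- c3 * real p / 8)"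
    proof -
      have "c3 * real p ^ 3 / (8 * real p^2) \<le> real t / (8 * real p^2)"
        using tp p0 by (intro divide_right_mono) auto
      moreover have "c3 * real p ^ 3 / (8 * real p^2) = c3 * real p / 8"
        using p0 by (simp add: field_simps power2_eq_square power3_eq_cube)
      ultimately show ?thesis by simp
    qed
    finally have qt: "?q^t \<le> exp (- c3 * real p / 8)" .
    have "2 * real p * En p ?\<mu> \<le> 2 * real p * (?q^t * (2 * real p))"
      using Et E0 q0 p0 by (intro mult_left_mono order_trans[OF Et] mult_left_mono) auto
    also have "\<dots> \<le> 4 * real p^2 * exp (- c3 * real p / 8)"
      using qt p0 by (simp add: power2_eq_square mult_left_mono)
    also have "\<dots> \<le> 1 / (4 * real p^2)" using X0[OF pX] by simp
    also have "\<dots> = (1 / (2 * real p))^2" by (simp add: power2_eq_square)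
    finally have "sqrt (2 * real p * En p ?\<mu>) \<le> 1 / (2 * real p)"
      by (intro real_le_lsqrt) auto
    moreover have "(real p - 1)/(2*real p) - sqrt (2*real p * En p ?\<mu>) \<le> (\<Sum>c\<in>AA p b. ?\<mu> c)"
      by (rule final_bound[OF p0 nn muu_sum[OF p0] b])
    moreover have "1/2 - 1 / ln (real n) \<le> (real p - 1)/(2*real p) - 1/(2*real p)"
    proof -
      have "1 / real p \<le> 1 / ln (real n)" using pl ln0 by (intro divide_left_mono) auto
      moreover have "(real p - 1)/(2*real p) - 1/(2*real p) = 1/2 - 1/real p" using p0 by (simp add: field_simps)
      ultimately show ?thesis by simp
    qed
    ultimately show "1/2 - 1 / ln (real n) \<le> real (card {x \<in> {1..t} \<rightarrow>\<^sub>E {0, 1::int}.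
            (MM p (a 0 + (\<Sum>i=1..t. a i * x i)) + (u 0 + (\<Sum>i=1..t. u i * x i)) mod 2) mod 2 = b}) / 2 ^ t"
      unfolding prob_eq[OF p0] by linarith
  qed
qed
end
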